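(* For any $\alpha\ge0$, almost surely $\bigcap_{n\ge1}\overline{T^\alpha_n}=\bigcap_{n\ge1}T^\alpha_n$.
   Context: Let $(X_j^i)_{j\ge 1,\,i\ge 0}$ be i.i.d. uniform on $\{-1,1\}$ and $(N_j(t),t\ge0)_{j\ge1}$ independent rate-$1$ Poisson processes independent of them; set $X_j(t)=X_j^i$ whenever $N_j(t)=i$ and $Z_n(t)=\sum_{k=1}^n\prod_{j=1}^k X_j(t)$. For $\alpha\ge0$ let $P^\alpha_n(t)=\{Z_i(t)\ge i^\alpha \ \forall i=1,\ldots,n\}$, $T^\alpha_n=\{t\in[0,1]:P^\alpha_n(t)\text{ holds}\}$, and $\overline{T^\alpha_n}$ its closure. *)

theory Defs
  imports "HOL-Probability.Probability"
begin

definition poisson_count :: "(nat \<Rightarrow> nat \<Rightarrow> 'a \<Rightarrow> real) \<Rightarrow> nat \<Rightarrow> real \<Rightarrow> 'a \<Rightarrow> nat" where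
  "poisson_count E j t \<omega> = card {k::nat. 1 \<le> k \<and> (\<Sum>i=1..k. E j i \<omega>) \<le> t}"

definition Xt :: "(nat \<Rightarrow> nat \<Rightarrow> 'a \<Rightarrow> real) \<Rightarrow> (nat \<Rightarrow> nat \<Rightarrow> 'a \<Rightarrow> real) \<Rightarrow> nat \<Rightarrow> real \<Rightarrow> 'a \<Rightarrow> real" where
  "Xt X E j t \<omega> = X j (poisson_count E j t \<omega>) \<omega>"

definition Zt :: "(nat \<Rightarrow> nat \<Rightarrow> 'a \<Rightarrow> real) \<Rightarrow> (nat \<Rightarrow> nat \<Rightarrow> 'a \<Rightarrow> real) \<Rightarrow> nat \<Rightarrow> real \<Rightarrow> 'a \<Rightarrow> real" where
  "Zt X E n t \<omega> = (\<Sum>k=1..n. \<Prod>j=1..k. Xt X E j t \<omega>)"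

definition Tset :: "(nat \<Rightarrow> nat \<Rightarrow> 'a \<Rightarrow> real) \<Rightarrow> (nat \<Rightarrow> nat \<Rightarrow> 'a \<Rightarrow> real) \<Rightarrow> real \<Rightarrow> nat \<Rightarrow> 'a \<Rightarrow> real set" where
  "Tset X E \<alpha> n \<omega> = {t \<in> {0..1}. \<forall>i\<in>{1..n}. Zt X E i t \<omega> \<ge> real i powr \<alpha>}"

end

theory Submission
  imports Defs
begin

fun okY :: "real \<Rightarrow> real \<Rightarrow> real list \<Rightarrow> bool" where
  "okY h s [] = True"
| "okY h s (y # ys) = (1 \<le> h + s * y \<and> okY (h + s * y) (s * y) ys)"

fun hfin :: "real \<Rightarrow> real \<Rightarrow> real list \<Rightarrow> real" where
  "hfin h s [] = h"
| "hfin h s (y # ys) = hfin (h + s * y) (s * y) ys"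

fun sfin :: "real \<Rightarrow> real list \<Rightarrow> real" where
  "sfin s [] = s"
| "sfin s (y # ys) = sfin (s * y) ys"

lemma hfin_snoc: "hfin h s (xs @ [x]) = hfin h s xs + sfin s xs * x"
  by (induction xs arbitrary: h s) auto

lemma sfin_snoc: "sfin s (xs @ [x]) = sfin s xs * x"
  by (induction xs arbitrary: s) auto

lemma okY_snoc: "okY h s (xs @ [x]) = (okY h s xs \<and> 1 \<le> hfin h s xs + sfin s xs * x)"
  by (induction xs arbitrary: h s) auto

lemma walk_fin:
  "hfin 0 1 (map y [1..<Suc n]) = (\<Sum>l=1..n. \<Prod>i=1..l. y i) \<and> sfin 1 (map y [1..<Suc n]) = (\<Prod>i=1..n. y i)"
proof (induction n)
  case 0
  then show ?case by simp
next
  case (Suc n)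
  have e: "map y [1..<Suc (Suc n)] = map y [1..<Suc n] @ [y (Suc n)]" by simp
  show ?case using Suc by (simp only: e hfin_snoc sfin_snoc) simp
qed

lemma walk_okY:
  "okY 0 1 (map y [1..<Suc N]) \<longleftrightarrow> (\<forall>n\<in>{1..N}. 1 \<le> (\<Sum>l=1..n. \<Prod>i=1..l. y i))"
proof (induction N)
  case 0
  then show ?case by simp
next
  case (Suc N)
  have e: "map y [1..<Suc (Suc N)] = map y [1..<Suc N] @ [y (Suc N)]" by simp
  have w: "hfin 0 1 (map y [1..<Suc N]) + sfin 1 (map y [1..<Suc N]) * y (Suc N)
      = (\<Sum>l=1..Suc N. \<Prod>i=1..l. y i)"
    using walk_fin[of y N] by simp
  have I: "{1..Suc N} = insert (Suc N) {1..N}" by auto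
  show ?case
    unfolding e okY_snoc Suc w I by auto
qed

definition LL :: "nat \<Rightarrow> real list set" where
  "LL N = {ys. length ys = N \<and> set ys \<subseteq> {-1, 1}}"

lemma finite_LL: "finite (LL N)"
proof -
  have "LL N \<subseteq> {ys. set ys \<subseteq> {-1,1} \<and> length ys = N}" unfolding LL_def by auto
  moreover have "finite {ys. set ys \<subseteq> {-1::real,1} \<and> length ys = N}"
    by (rule finite_lists_length_eq) simp
  ultimately show ?thesis by (rule finite_subset)
qed

fun aa :: "nat \<Rightarrow> real \<Rightarrow> real" where
  "aa 0 h = 1"
| "aa (Suc N) h = ((if 1 \<le> h + 1 then aa N (h + 1) else 0) + (if 1 \<le> h - 1 then aa N (h - 1) else 0)) / 2"

lemma LL_Suc_split:
  "{ys \<in> LL (Suc N). okY h s ys} =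
     (\<lambda>ys. 1 # ys) ` {ys \<in> LL N. 1 \<le> h + s \<and> okY (h + s) s ys} \<union>
     (\<lambda>ys. (-1) # ys) ` {ys \<in> LL N. 1 \<le> h - s \<and> okY (h - s) (- s) ys}"
proof (rule set_eqI)
  fix zs
  show "zs \<in> {ys \<in> LL (Suc N). okY h s ys} \<longleftrightarrow> zs \<in> (\<lambda>ys. 1 # ys) ` {ys \<in> LL N. 1 \<le> h + s \<and> okY (h + s) s ys} \<union>
     (\<lambda>ys. (-1) # ys) ` {ys \<in> LL N. 1 \<le> h - s \<and> okY (h - s) (- s) ys}"
  proof (cases zs)
    case Nil
    then show ?thesis by (auto simp: LL_def)
  next
    case (Cons y ys)
    show ?thesis
    proof
      assume "zs \<in> {ys \<in> LL (Suc N). okY h s ys}"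
      then have "y = 1 \<or> y = -1" "ys \<in> LL N" "1 \<le> h + s * y" "okY (h + s * y) (s * y) ys"
        using Cons by (auto simp: LL_def)
      then show "zs \<in> (\<lambda>ys. 1 # ys) ` {ys \<in> LL N. 1 \<le> h + s \<and> okY (h + s) s ys} \<union>
       (\<lambda>ys. (-1) # ys) ` {ys \<in> LL N. 1 \<le> h - s \<and> okY (h - s) (- s) ys}"
        using Cons by auto
    next
      assume "zs \<in> (\<lambda>ys. 1 # ys) ` {ys \<in> LL N. 1 \<le> h + s \<and> okY (h + s) s ys} \<union>
       (\<lambda>ys. (-1) # ys) ` {ys \<in> LL N. 1 \<le> h - s \<and> okY (h - s) (- s) ys}"
      then show "zs \<in> {ys \<in> LL (Suc N). okY h s ys}"
        by (auto simp: LL_def)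
    qed
  qed
qed

lemma card_okY:
  assumes "s = 1 \<or> s = -1"
  shows "real (card {ys \<in> LL N. okY h s ys}) = 2 ^ N * aa N h"
  using assms
proof (induction N arbitrary: h s)
  case 0
  have "{ys \<in> LL 0. okY h s ys} = {[]}" by (auto simp: LL_def)
  then show ?case by simp
next
  case (Suc N)
  let ?A = "{ys \<in> LL N. 1 \<le> h + s \<and> okY (h + s) s ys}"
  let ?B = "{ys \<in> LL N. 1 \<le> h - s \<and> okY (h - s) (- s) ys}"
  have fA: "finite ?A" "finite ?B" using finite_LL by auto
  have c: "card {ys \<in> LL (Suc N). okY h s ys} = card ?A + card ?B"
    unfolding LL_Suc_split
    by (subst card_Un_disjoint) (auto simp: fA card_image inj_on_def)
  have cA: "real (card ?A) = (if 1 \<le> h + s then 2 ^ N * aa N (h + s) else 0)"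
    using Suc.IH[of s "h + s"] Suc.prems by auto
  have cB: "real (card ?B) = (if 1 \<le> h - s then 2 ^ N * aa N (h - s) else 0)"
    using Suc.IH[of "- s" "h - s"] Suc.prems by auto
  show ?case
    using Suc.prems
  proof
    assume "s = 1" then show ?thesis using c cA cB by (simp add: field_simps)
  next
    assume "s = -1" then show ?thesis using c cA cB by (simp add: field_simps)
  qed
qed

lemma aa_bounds: "0 \<le> aa N h \<and> aa N h \<le> 1"
proof (induction N arbitrary: h)
  case 0
  then show ?case by simp
next
  case (Suc N)
  show ?case using Suc.IH[of "h+1"] Suc.IH[of "h-1"] by auto
qed

lemma aa_dec: "aa (Suc N) h \<le> aa N h"
proof (induction N arbitrary: h)
  case 0
  then show ?case using aa_bounds[of "Suc 0" h] by simp
next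
  case (Suc N)
  have "aa (Suc (Suc N)) h = ((if 1 \<le> h + 1 then aa (Suc N) (h + 1) else 0) + (if 1 \<le> h - 1 then aa (Suc N) (h - 1) else 0)) / 2"
    by simp
  also have "\<dots> \<le> ((if 1 \<le> h + 1 then aa N (h + 1) else 0) + (if 1 \<le> h - 1 then aa N (h - 1) else 0)) / 2"
    using Suc.IH[of "h+1"] Suc.IH[of "h-1"] by (intro divide_right_mono add_mono) auto
  also have "\<dots> = aa (Suc N) h" by simp
  finally show ?case .
qed

lemma aa_conv: "\<exists>L. (\<lambda>N. aa N h) \<longlonglongrightarrow> L \<and> 0 \<le> L \<and> L \<le> 1"
proof -
  have "decseq (\<lambda>N. aa N h)" using aa_dec by (intro decseq_SucI) auto
  then obtain L where L: "(\<lambda>N. aa N h) \<longlonglongrightarrow> L" "\<forall>i. L \<le> aa i h"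
    using decseq_convergent[of "\<lambda>N. aa N h" 0] aa_bounds by blast
  have "0 \<le> L" using L(1) aa_bounds by (intro LIMSEQ_le_const) auto
  moreover have "L \<le> 1" using L(2) by (metis aa.simps(1))
  ultimately show ?thesis using L by blast
qed

lemma aa_lim0: "(\<lambda>N. aa N 0) \<longlonglongrightarrow> 0"
proof -
  define L where "L n = lim (\<lambda>N. aa N (real n))" for n :: nat
  have L: "(\<lambda>N. aa N (real n)) \<longlonglongrightarrow> L n" "0 \<le> L n" "L n \<le> 1" for n
  proof -
    obtain L' where "(\<lambda>N. aa N (real n)) \<longlonglongrightarrow> L'" "0 \<le> L'" "L' \<le> 1" using aa_conv by blast
    then show "(\<lambda>N. aa N (real n)) \<longlonglongrightarrow> L n" "0 \<le> L n" "L n \<le> 1"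
      unfolding L_def by (auto simp: limI)
  qed
  have rec: "L n = (L (n + 1) + (if 2 \<le> n then L (n - 1) else 0)) / 2" if "1 \<le> n" for n
  proof -
    have "(\<lambda>N. aa (Suc N) (real n)) \<longlonglongrightarrow> L n" using L(1)[of n] by (rule LIMSEQ_Suc)
    moreover have "(\<lambda>N. aa (Suc N) (real n)) = (\<lambda>N. (aa N (real (n+1)) + (if 2 \<le> n then aa N (real (n - 1)) else 0)) / 2)"
      using that by (intro ext) (simp add: of_nat_diff add.commute)
    moreover have "(\<lambda>N. (aa N (real (n+1)) + (if 2 \<le> n then aa N (real (n - 1)) else 0)) / 2)
        \<longlonglongrightarrow> (L (n + 1) + (if 2 \<le> n then L (n - 1) else 0)) / 2"
    proof (cases "2 \<le> n")
      case True
      then show ?thesis by (simp only: if_True) (intro tendsto_divide tendsto_add L(1) tendsto_const, simp)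
    next
      case False
      then show ?thesis by (simp only: if_False) (intro tendsto_divide tendsto_add L(1) tendsto_const, simp)
    qed
    ultimately show ?thesis using LIMSEQ_unique by metis
  qed
  have lin: "L (Suc n) = real (Suc n) * L 1 \<and> L (Suc (Suc n)) = real (Suc (Suc n)) * L 1" for n
  proof (induction n)
    case 0
    have "L 1 = (L 2 + 0) / 2" using rec[of 1] by (simp add: numeral_2_eq_2)
    then show ?case by (simp add: numeral_2_eq_2)
  next
    case (Suc n)
    have "L (Suc (Suc n)) = (L (Suc (Suc (Suc n))) + L (Suc n)) / 2"
      using rec[of "Suc (Suc n)"] by simp
    then have "L (Suc (Suc (Suc n))) = 2 * L (Suc (Suc n)) - L (Suc n)" by simp
    then show ?case using Suc by (simp add: algebra_simps)
  qed
  have "L 1 = 0"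
  proof (rule ccontr)
    assume "L 1 \<noteq> 0"
    then have pos: "0 < L 1" using L(2)[of 1] by simp
    obtain n :: nat where n: "1 / L 1 < real n" using reals_Archimedean2 by blast
    have "L (Suc n) = real (Suc n) * L 1" using lin by blast
    moreover have "real (Suc n) * L 1 > 1"
      using n pos by (simp add: field_simps)
    ultimately show False using L(3)[of "Suc n"] by simp
  qed
  then have "(\<lambda>N. aa N 1) \<longlonglongrightarrow> 0" using L(1)[of 1] by simp
  then have "(\<lambda>N. aa N 1 / 2) \<longlonglongrightarrow> 0" by (auto intro: tendsto_eq_intros)
  moreover have "(\<lambda>N. aa (Suc N) 0) = (\<lambda>N. aa N 1 / 2)" by auto
  ultimately have "(\<lambda>N. aa (Suc N) 0) \<longlonglongrightarrow> 0" by metis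
  then show ?thesis by (rule LIMSEQ_imp_Suc)
qed

lemma finite_common_delta:
  assumes "finite I" "\<And>i. i \<in> I \<Longrightarrow> \<exists>d>0. P i d"
    and "\<And>i d d'. P i d \<Longrightarrow> 0 < d' \<Longrightarrow> d' \<le> d \<Longrightarrow> P i d'"
  shows "\<exists>d>(0::real). \<forall>i\<in>I. P i d"
  using assms(1,2)
proof (induction I rule: finite_induct)
  case empty
  then show ?case by (auto intro: exI[of _ 1])
next
  case (insert x F)
  obtain d1 where d1: "d1 > 0" "\<forall>i\<in>F. P i d1" using insert by auto
  obtain d2 where d2: "d2 > 0" "P x d2" using insert by auto
  show ?case
    using d1 d2 assms(3)[of _ d1 "min d1 d2"] assms(3)[of _ d2 "min d1 d2"]
    by (intro exI[of _ "min d1 d2"]) auto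
qed

lemma S_mono:
  fixes E :: "nat \<Rightarrow> nat \<Rightarrow> 'a \<Rightarrow> real"
  assumes pos: "\<forall>m\<ge>1. 0 < E i m \<omega>" and "m \<le> m'"
  shows "(\<Sum>l=1..m. E i l \<omega>) \<le> (\<Sum>l=1..m'. E i l \<omega>)"
  by (rule sum_mono2[of "{1..m'}" "{1..m}" "\<lambda>l. E i l \<omega>"]) (use pos assms(2) in \<open>auto intro: less_imp_le\<close>)

lemma S_ge:
  fixes E :: "nat \<Rightarrow> nat \<Rightarrow> 'a \<Rightarrow> real"
  assumes pos: "\<forall>m\<ge>1. 0 < E i m \<omega>" and "1 \<le> m"
  shows "E i m \<omega> \<le> (\<Sum>l=1..m. E i l \<omega>)"
proof -
  have "(\<Sum>l\<in>{m}. E i l \<omega>) \<le> (\<Sum>l=1..m. E i l \<omega>)"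
    by (rule sum_mono2[of "{1..m}" "{m}" "\<lambda>l. E i l \<omega>"]) (use pos assms(2) in \<open>auto intro: less_imp_le\<close>)
  then show ?thesis by simp
qed

lemma local_const:
  fixes E :: "nat \<Rightarrow> nat \<Rightarrow> 'a \<Rightarrow> real"
  assumes pos: "\<forall>m\<ge>1. 0 < E i m \<omega>" and big: "\<exists>m\<ge>1. 1 < E i m \<omega>" and t: "t \<le> 1"
  shows "\<exists>d>0. \<forall>s. (t \<le> s \<and> s < t + d \<longrightarrow> poisson_count E i s \<omega> = poisson_count E i t \<omega>) \<and>
      (t - d < s \<and> s < t \<longrightarrow> poisson_count E i s \<omega> = card {m. 1 \<le> m \<and> (\<Sum>l=1..m. E i l \<omega>) < t})"
proof -
  define S where "S m = (\<Sum>l=1..m. E i l \<omega>)" for m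
  obtain m0 where m0: "1 \<le> m0" "1 < E i m0 \<omega>" using big by auto
  have Sm0: "t < S m0" using S_ge[of E i \<omega> m0, OF pos m0(1)] m0 t unfolding S_def by simp
  have Smono: "m \<le> m' \<Longrightarrow> S m \<le> S m'" for m m' using S_mono[of E i \<omega>, OF pos] unfolding S_def by blast
  obtain d0 where d0: "d0 > 0" "\<forall>x\<in>S ` {1..m0}. x \<noteq> t \<longrightarrow> d0 \<le> dist t x"
    using finite_set_avoid[of "S ` {1..m0}" t] by auto
  define d where "d = min d0 (S m0 - t)"
  have dpos: "d > 0" using d0 Sm0 unfolding d_def by simp
  have restr: "{m. 1 \<le> m \<and> S m \<le> s} = {m\<in>{1..m0}. S m \<le> s}" if "s < S m0" for s
  proof -
    have "S m \<le> s \<Longrightarrow> m \<le> m0" for m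
      using Smono[of m0 m] that by (cases "m0 \<le> m") auto
    then show ?thesis by auto
  qed
  have restr2: "{m. 1 \<le> m \<and> S m < t} = {m\<in>{1..m0}. S m < t}"
  proof -
    have "S m < t \<Longrightarrow> m \<le> m0" for m
      using Smono[of m0 m] Sm0 by (cases "m0 \<le> m") auto
    then show ?thesis by auto
  qed
  have pc: "poisson_count E i s \<omega> = card {m. 1 \<le> m \<and> S m \<le> s}" for s
    unfolding poisson_count_def S_def by simp
  show ?thesis
  proof (intro exI[of _ d] conjI allI impI dpos)
    fix s assume s: "t \<le> s \<and> s < t + d"
    then have "s < S m0" using min.cobounded2[of d0 "S m0 - t"] unfolding d_def by linarith
    have "{m\<in>{1..m0}. S m \<le> s} = {m\<in>{1..m0}. S m \<le> t}"
    proof (intro Collect_cong conj_cong refl iffI)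
      fix m assume m: "m \<in> {1..m0}" "S m \<le> s"
      show "S m \<le> t"
      proof (rule ccontr)
        assume "\<not> S m \<le> t"
        then have "d0 \<le> dist t (S m)" using d0(2) m by auto
        then have "d0 \<le> S m - t" using \<open>\<not> S m \<le> t\<close> by (simp add: dist_real_def)
        then show False using s m min.cobounded1[of d0 "S m0 - t"] unfolding d_def by linarith
      qed
    next
      fix m assume "S m \<le> t" then show "S m \<le> s" using s by simp
    qed
    then show "poisson_count E i s \<omega> = poisson_count E i t \<omega>"
      unfolding pc using restr[OF \<open>s < S m0\<close>] restr[of t] Sm0 by simp
  next
    fix s assume s: "t - d < s \<and> s < t"
    then have "s < S m0" using Sm0 by simp
    have "{m\<in>{1..m0}. S m \<le> s} = {m\<in>{1..m0}. S m < t}"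
    proof (intro Collect_cong conj_cong refl iffI)
      fix m assume m: "m \<in> {1..m0}" "S m < t"
      then have "d0 \<le> dist t (S m)" using d0(2) m by auto
      then have "d0 \<le> t - S m" using m by (simp add: dist_real_def)
      then show "S m \<le> s" using s m min.cobounded1[of d0 "S m0 - t"] unfolding d_def by linarith
    next
      fix m assume "S m \<le> s" then show "S m < t" using s by simp
    qed
    then show "poisson_count E i s \<omega> = card {m. 1 \<le> m \<and> (\<Sum>l=1..m. E i l \<omega>) < t}"
      unfolding pc using restr[OF \<open>s < S m0\<close>] restr2 unfolding S_def by simp
  qed
qed

lemma local_const_all:
  fixes E :: "nat \<Rightarrow> nat \<Rightarrow> 'a \<Rightarrow> real"
  assumes pos: "\<forall>i\<ge>1. \<forall>m\<ge>1. 0 < E i m \<omega>" and big: "\<forall>i\<ge>1. \<exists>m\<ge>1. 1 < E i m \<omega>" and t: "t \<le> 1"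
  shows "\<exists>d>0. \<forall>i\<in>{1..n}. \<forall>s. (t \<le> s \<and> s < t + d \<longrightarrow> poisson_count E i s \<omega> = poisson_count E i t \<omega>) \<and>
      (t - d < s \<and> s < t \<longrightarrow> poisson_count E i s \<omega> = card {m. 1 \<le> m \<and> (\<Sum>l=1..m. E i l \<omega>) < t})"
proof (rule finite_common_delta[where P = "\<lambda>i d. \<forall>s. (t \<le> s \<and> s < t + d \<longrightarrow> poisson_count E i s \<omega> = poisson_count E i t \<omega>) \<and>
      (t - d < s \<and> s < t \<longrightarrow> poisson_count E i s \<omega> = card {m. 1 \<le> m \<and> (\<Sum>l=1..m. E i l \<omega>) < t})"])
  fix i assume "i \<in> {1..n}"
  then have "1 \<le> i" by simp
  then show "\<exists>d>0. \<forall>s. (t \<le> s \<and> s < t + d \<longrightarrow> poisson_count E i s \<omega> = poisson_count E i t \<omega>) \<and>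
      (t - d < s \<and> s < t \<longrightarrow> poisson_count E i s \<omega> = card {m. 1 \<le> m \<and> (\<Sum>l=1..m. E i l \<omega>) < t})"
    using local_const[of E i \<omega> t] pos big t by blast
next
  fix i and d d' :: real
  assume H: "\<forall>s. (t \<le> s \<and> s < t + d \<longrightarrow> poisson_count E i s \<omega> = poisson_count E i t \<omega>) \<and>
      (t - d < s \<and> s < t \<longrightarrow> poisson_count E i s \<omega> = card {m. 1 \<le> m \<and> (\<Sum>l=1..m. E i l \<omega>) < t})"
    and d': "0 < d'" "d' \<le> d"
  show "\<forall>s. (t \<le> s \<and> s < t + d' \<longrightarrow> poisson_count E i s \<omega> = poisson_count E i t \<omega>) \<and>
      (t - d' < s \<and> s < t \<longrightarrow> poisson_count E i s \<omega> = card {m. 1 \<le> m \<and> (\<Sum>l=1..m. E i l \<omega>) < t})"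
  proof (intro allI conjI impI)
    fix s
    assume "t \<le> s \<and> s < t + d'"
    then have "t \<le> s \<and> s < t + d" using d' by simp
    then show "poisson_count E i s \<omega> = poisson_count E i t \<omega>" using H by blast
  next
    fix s
    assume "t - d' < s \<and> s < t"
    then have "t - d < s \<and> s < t" using d' by simp
    then show "poisson_count E i s \<omega> = card {m. 1 \<le> m \<and> (\<Sum>l=1..m. E i l \<omega>) < t}" using H by blast
  qed
qed simp

lemma Tset_mono: "m \<le> n \<Longrightarrow> Tset X E \<alpha> n \<omega> \<subseteq> Tset X E \<alpha> m \<omega>"
  unfolding Tset_def by auto

lemma det_main:
  fixes X E :: "nat \<Rightarrow> nat \<Rightarrow> 'a \<Rightarrow> real"
  assumes pos: "\<forall>i\<ge>1. \<forall>m\<ge>1. 0 < E i m \<omega>"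
    and big: "\<forall>i\<ge>1. \<exists>m\<ge>1. 1 < E i m \<omega>"
    and nobad: "\<forall>j\<ge>1. \<forall>k\<ge>1. (\<Sum>l=1..k. E j l \<omega>) \<le> 1 \<longrightarrow>
       \<not> (\<forall>n\<ge>1. 1 \<le> (\<Sum>l=1..n. \<Prod>i=1..l. X i (card {m. 1 \<le> m \<and> (\<Sum>l'=1..m. E i l' \<omega>) < (\<Sum>l=1..k. E j l \<omega>)}) \<omega>))"
    and alpha: "\<alpha> \<ge> 0"
  shows "(\<Inter>n\<in>{1..}. closure (Tset X E \<alpha> n \<omega>)) = (\<Inter>n\<in>{1..}. Tset X E \<alpha> n \<omega>)"
proof
  show "(\<Inter>n\<in>{1..}. Tset X E \<alpha> n \<omega>) \<subseteq> (\<Inter>n\<in>{1..}. closure (Tset X E \<alpha> n \<omega>))"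
    using closure_subset by blast
next
  show "(\<Inter>n\<in>{1..}. closure (Tset X E \<alpha> n \<omega>)) \<subseteq> (\<Inter>n\<in>{1..}. Tset X E \<alpha> n \<omega>)"
  proof
    fix t assume tcl: "t \<in> (\<Inter>n\<in>{1..}. closure (Tset X E \<alpha> n \<omega>))"
    define Nm where "Nm i = card {m. 1 \<le> m \<and> (\<Sum>l=1..m. E i l \<omega>) < t}" for i
    define ZL where "ZL n = (\<Sum>l=1..n. \<Prod>i=1..l. X i (Nm i) \<omega>)" for n
    show "t \<in> (\<Inter>n\<in>{1..}. Tset X E \<alpha> n \<omega>)"
    proof (rule ccontr)
      assume "t \<notin> (\<Inter>n\<in>{1..}. Tset X E \<alpha> n \<omega>)"
      then obtain m0 where m0: "1 \<le> m0" "t \<notin> Tset X E \<alpha> m0 \<omega>" by auto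
      have "closure (Tset X E \<alpha> m0 \<omega>) \<subseteq> {0..1}"
        by (rule closure_minimal) (auto simp: Tset_def)
      then have t01: "t \<in> {0..1}" using tcl m0 by auto
      have Zeq: "Zt X E l s \<omega> = Zt X E l t \<omega>"
        if "l \<le> n" "\<forall>i\<in>{1..n}. poisson_count E i s \<omega> = poisson_count E i t \<omega>" for l n s
        unfolding Zt_def Xt_def using that by (intro sum.cong prod.cong) auto
      have ZLeq: "Zt X E l s \<omega> = ZL l"
        if "l \<le> n" "\<forall>i\<in>{1..n}. poisson_count E i s \<omega> = Nm i" for l n s
        unfolding Zt_def Xt_def ZL_def using that by (intro sum.cong prod.cong) auto
      have A: "real l powr \<alpha> \<le> ZL l" if "1 \<le> l" for l
      proof -
        define n' where "n' = max l m0"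
        obtain d where d: "d > 0" "\<forall>i\<in>{1..n'}. \<forall>s. (t \<le> s \<and> s < t + d \<longrightarrow> poisson_count E i s \<omega> = poisson_count E i t \<omega>) \<and>
          (t - d < s \<and> s < t \<longrightarrow> poisson_count E i s \<omega> = Nm i)"
          using local_const_all[where E=E and \<omega>=\<omega> and t=t and n=n', OF pos big] t01 unfolding Nm_def by auto
        have "t \<in> closure (Tset X E \<alpha> n' \<omega>)" using tcl that unfolding n'_def by auto
        then obtain s where s: "s \<in> Tset X E \<alpha> n' \<omega>" "dist s t < d"
          using d(1) unfolding closure_approachable by blast
        have "Tset X E \<alpha> n' \<omega> \<subseteq> Tset X E \<alpha> m0 \<omega>" by (rule Tset_mono) (simp add: n'_def)
        then have tn: "t \<notin> Tset X E \<alpha> n' \<omega>" using m0 by blast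
        then have "s \<noteq> t" using s by auto
        have sT: "\<forall>i\<in>{1..n'}. real i powr \<alpha> \<le> Zt X E i s \<omega>" using s(1) unfolding Tset_def by blast
        show ?thesis
        proof (cases "t < s")
          case True
          have sd: "t \<le> s" "s < t + d" using True s(2) by (auto simp: dist_real_def)
          have pe: "\<forall>i\<in>{1..n'}. poisson_count E i s \<omega> = poisson_count E i t \<omega>"
          proof
            fix i assume i: "i \<in> {1..n'}"
            show "poisson_count E i s \<omega> = poisson_count E i t \<omega>"
              using bspec[OF d(2) i, THEN spec[of _ s]] sd by simp
          qed
          have "\<forall>i\<in>{1..n'}. real i powr \<alpha> \<le> Zt X E i t \<omega>"
          proof
            fix i assume i: "i \<in> {1..n'}"
            have "Zt X E i s \<omega> = Zt X E i t \<omega>" by (rule Zeq[OF _ pe]) (use i in simp)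
            then show "real i powr \<alpha> \<le> Zt X E i t \<omega>" using bspec[OF sT i] by simp
          qed
          then have "t \<in> Tset X E \<alpha> n' \<omega>"
            using t01 unfolding Tset_def by blast
          then show ?thesis using tn by simp
        next
          case False
          then have sd: "t - d < s" "s < t" using \<open>s \<noteq> t\<close> s(2) by (auto simp: dist_real_def)
          have pe: "\<forall>i\<in>{1..n'}. poisson_count E i s \<omega> = Nm i"
          proof
            fix i assume i: "i \<in> {1..n'}"
            show "poisson_count E i s \<omega> = Nm i"
              using bspec[OF d(2) i, THEN spec[of _ s]] sd by simp
          qed
          have "l \<in> {1..n'}" using that by (simp add: n'_def)
          have "Zt X E l s \<omega> = ZL l" by (rule ZLeq[OF _ pe]) (simp add: n'_def)
          then show ?thesis using bspec[OF sT \<open>l \<in> {1..n'}\<close>] by simp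
        qed
      qed
      have B: "\<exists>i\<in>{1..m0}. \<exists>k\<ge>1. (\<Sum>l=1..k. E i l \<omega>) = t"
      proof (rule ccontr)
        assume nB: "\<not> ?thesis"
        have "\<forall>i\<in>{1..m0}. poisson_count E i t \<omega> = Nm i"
        proof
          fix i assume i: "i \<in> {1..m0}"
          have ne: "1 \<le> m \<Longrightarrow> (\<Sum>l=1..m. E i l \<omega>) \<noteq> t" for m using nB i by blast
          have "{m. 1 \<le> m \<and> (\<Sum>l=1..m. E i l \<omega>) \<le> t} = {m. 1 \<le> m \<and> (\<Sum>l=1..m. E i l \<omega>) < t}"
          proof (intro Collect_cong)
            fix m
            show "(1 \<le> m \<and> (\<Sum>l=1..m. E i l \<omega>) \<le> t) = (1 \<le> m \<and> (\<Sum>l=1..m. E i l \<omega>) < t)"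
              using ne[of m] by auto
          qed
          then show "poisson_count E i t \<omega> = Nm i" unfolding poisson_count_def Nm_def by simp
        qed
        have "\<forall>i\<in>{1..m0}. real i powr \<alpha> \<le> Zt X E i t \<omega>"
        proof
          fix i assume i: "i \<in> {1..m0}"
          have "Zt X E i t \<omega> = ZL i" by (rule ZLeq[OF _ \<open>\<forall>i\<in>{1..m0}. poisson_count E i t \<omega> = Nm i\<close>]) (use i in simp)
          then show "real i powr \<alpha> \<le> Zt X E i t \<omega>" using A[of i] i by simp
        qed
        then have "t \<in> Tset X E \<alpha> m0 \<omega>"
          using t01 unfolding Tset_def by blast
        then show False using m0 by simp
      qed
      then obtain j k where jk: "1 \<le> j" "1 \<le> k" "(\<Sum>l=1..k. E j l \<omega>) = t" by auto
      have "\<forall>n\<ge>1. 1 \<le> ZL n"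
      proof (intro allI impI)
        fix n :: nat assume "1 \<le> n"
        have "1 \<le> real n powr \<alpha>" using \<open>1 \<le> n\<close> alpha by (intro ge_one_powr_ge_zero) auto
        then show "1 \<le> ZL n" using A[OF \<open>1 \<le> n\<close>] by simp
      qed
      moreover have "\<not> (\<forall>n\<ge>1. 1 \<le> ZL n)"
        using nobad[rule_format, OF jk(1) jk(2)] jk(3) t01 unfolding ZL_def Nm_def by simp
      ultimately show False by blast
    qed
  qed
qed

definition gen :: "'a measure \<Rightarrow> ('u \<Rightarrow> 'a \<Rightarrow> real) \<Rightarrow> 'u \<Rightarrow> 'a set set" where
  "gen M Y u = {Y u -` B \<inter> space M | B. B \<in> sets borel}"

lemma Int_stable_gen: "Int_stable (gen M Y u)"
  unfolding Int_stable_def gen_def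
proof (safe)
  fix B B' :: "real set" assume "B \<in> sets borel" "B' \<in> sets borel"
  then show "\<exists>C. (Y u -` B \<inter> space M) \<inter> (Y u -` B' \<inter> space M) = Y u -` C \<inter> space M \<and> C \<in> sets borel"
    by (intro exI[of _ "B \<inter> B'"]) auto
qed

lemma (in prob_space) indep_groups:
  fixes Y :: "'u \<Rightarrow> 'a \<Rightarrow> real"
  assumes ind: "indep_vars (\<lambda>_. borel) Y I"
    and J: "finite J" "J \<noteq> {}"
    and G: "\<And>g. g \<in> J \<Longrightarrow> G g \<subseteq> I" and disj: "disjoint_family_on G J"
    and A: "\<And>g. g \<in> J \<Longrightarrow> A g \<in> sigma_sets (space M) (\<Union>u\<in>G g. gen M Y u)"
  shows "prob (\<Inter>g\<in>J. A g) = (\<Prod>g\<in>J. prob (A g))"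
proof -
  have "indep_sets (gen M Y) I"
    using ind unfolding indep_vars_def2 gen_def by simp
  then have "indep_sets (gen M Y) (\<Union>g\<in>J. G g)"
    by (rule indep_sets_mono_index[rotated]) (use G in auto)
  then have "indep_sets (\<lambda>g. sigma_sets (space M) (\<Union>u\<in>G g. gen M Y u)) J"
    by (rule indep_sets_collect_sigma) (use Int_stable_gen disj in auto)
  then show ?thesis
    by (rule indep_setsD) (use J A in auto)
qed

lemma (in prob_space) gen_basic:
  assumes "u \<in> K" and that: "B \<in> sets borel"
  shows "{\<omega> \<in> space M. Y u \<omega> \<in> B} \<in> sigma_sets (space M) (\<Union>u\<in>K. gen M Y u)"
proof -
  have "{\<omega> \<in> space M. Y u \<omega> \<in> B} = Y u -` B \<inter> space M" by auto
  also have "\<dots> \<in> (\<Union>u\<in>K. gen M Y u)" using assms that unfolding gen_def by auto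
  finally show ?thesis by (rule sigma_sets.Basic)
qed

lemma (in prob_space) gen_meas:
  assumes "u \<in> K"
  shows "Y u \<in> borel_measurable (sigma (space M) (\<Union>u\<in>K. gen M Y u))"
proof (rule measurableI)
  have sub: "(\<Union>u\<in>K. gen M Y u) \<subseteq> Pow (space M)" unfolding gen_def by auto
  fix B :: "real set" assume "B \<in> sets borel"
  then have "Y u -` B \<inter> space M \<in> (\<Union>u\<in>K. gen M Y u)" using assms unfolding gen_def by auto
  then show "Y u -` B \<inter> space (sigma (space M) (\<Union>u\<in>K. gen M Y u)) \<in> sets (sigma (space M) (\<Union>u\<in>K. gen M Y u))"
    using sub by (simp add: sigma_sets.Basic)
qed simp

lemma (in prob_space) null_of_le_lim:
  assumes "A \<in> events" "\<And>n. prob A \<le> f n" "f \<longlonglongrightarrow> 0"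
  shows "A \<in> null_sets M"
proof -
  have "prob A \<le> 0" using assms(3) by (rule LIMSEQ_le_const) (use assms(2) in auto)
  then have "prob A = 0" using measure_nonneg[of M A] by simp
  then show ?thesis using assms(1) by (intro null_setsI) (simp add: emeasure_eq_measure)
qed

definition YY :: "(nat \<Rightarrow> nat \<Rightarrow> 'a \<Rightarrow> real) \<Rightarrow> (nat \<Rightarrow> nat \<Rightarrow> 'a \<Rightarrow> real) \<Rightarrow> (nat \<times> nat) + (nat \<times> nat) \<Rightarrow> 'a \<Rightarrow> real" where
  "YY X E u = (case u of Inl (j, i) \<Rightarrow> X j i | Inr (j, k) \<Rightarrow> E j k)"

definition II :: "((nat \<times> nat) + (nat \<times> nat)) set" where
  "II = Inl ` ({1..} \<times> UNIV) \<union> Inr ` ({1..} \<times> {1..})"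

locale lsetup = prob_space M for M :: "'a measure" +
  fixes X E :: "nat \<Rightarrow> nat \<Rightarrow> 'a \<Rightarrow> real"
  assumes indep0: "indep_vars (\<lambda>_. borel)
          (\<lambda>u. case u of Inl (j, i) \<Rightarrow> X j i | Inr (j, k) \<Rightarrow> E j k)
          (Inl ` ({1..} \<times> UNIV) \<union> Inr ` ({1..} \<times> {1..}))"
    and X_vals: "\<And>j i. 1 \<le> j \<Longrightarrow> AE \<omega> in M. X j i \<omega> \<in> {-1, 1}"
    and X_half: "\<And>j i. 1 \<le> j \<Longrightarrow> measure M {\<omega> \<in> space M. X j i \<omega> = 1} = 1/2"
    and E_exp: "\<And>j k. 1 \<le> j \<Longrightarrow> 1 \<le> k \<Longrightarrow> distributed M lborel (E j k) (exponential_density 1)"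
begin

lemma indep: "indep_vars (\<lambda>_. borel) (YY X E) II"
proof -
  have "YY X E = (\<lambda>u. case u of Inl (j, i) \<Rightarrow> X j i | Inr (j, k) \<Rightarrow> E j k)"
    by (simp add: fun_eq_iff YY_def)
  then show ?thesis using indep0 unfolding II_def by simp
qed

lemma rvY: "u \<in> II \<Longrightarrow> YY X E u \<in> borel_measurable M"
  using indep unfolding indep_vars_def2 by auto

lemma Xmeas: "1 \<le> j \<Longrightarrow> X j i \<in> borel_measurable M"
  using rvY[of "Inl (j, i)"] by (simp add: YY_def II_def)

lemma Emeas: "1 \<le> j \<Longrightarrow> 1 \<le> k \<Longrightarrow> E j k \<in> borel_measurable M"
  using rvY[of "Inr (j, k)"] by (simp add: YY_def II_def)

lemma Xprob:
  assumes j: "1 \<le> j" and y: "y = 1 \<or> y = -1"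
  shows "prob {\<omega> \<in> space M. X j i \<omega> = y} = 1/2"
  using y
proof
  assume "y = 1" then show ?thesis using X_half[OF j] by simp
next
  assume "y = -1"
  have m: "{\<omega> \<in> space M. X j i \<omega> = c} \<in> events" for c
    using Xmeas[OF j] by measurable
  have "{\<omega> \<in> space M. X j i \<omega> \<in> {-1, 1}} \<in> events"
    using Xmeas[OF j] by measurable
  then have "prob {\<omega> \<in> space M. X j i \<omega> \<in> {-1, 1}} = 1"
    using X_vals[OF j] by (simp add: prob_eq_1)
  moreover have "{\<omega> \<in> space M. X j i \<omega> \<in> {-1, 1}} = {\<omega> \<in> space M. X j i \<omega> = -1} \<union> {\<omega> \<in> space M. X j i \<omega> = 1}"
    by auto
  moreover have "prob ({\<omega> \<in> space M. X j i \<omega> = -1} \<union> {\<omega> \<in> space M. X j i \<omega> = 1}) =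
      prob {\<omega> \<in> space M. X j i \<omega> = -1} + prob {\<omega> \<in> space M. X j i \<omega> = 1}"
    by (rule finite_measure_Union) (use m in auto)
  ultimately show ?thesis using X_half[OF j] \<open>y = -1\<close> by simp
qed

lemma Epos_AE:
  assumes "1 \<le> j" "1 \<le> k"
  shows "AE \<omega> in M. 0 < E j k \<omega>"
proof -
  have "\<P>(x in M. 0 < E j k x) = exp (- 0 * 1)"
    by (rule exponential_distributedD_gt[OF E_exp[OF assms]]) auto
  moreover have "{x \<in> space M. 0 < E j k x} \<in> events" using Emeas[OF assms] by measurable
  ultimately have "AE x in M. x \<in> {x \<in> space M. 0 < E j k x}" by (simp add: prob_eq_1)
  then show ?thesis by auto
qed

lemma Ele1:
  assumes "1 \<le> j" "1 \<le> k"
  shows "prob {\<omega> \<in> space M. E j k \<omega> \<le> 1} = 1 - exp (-1)"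
  using exponential_distributedD_le[OF E_exp[OF assms], of 1] by simp

lemma big_AE:
  assumes j: "1 \<le> j"
  shows "AE \<omega> in M. \<exists>m\<ge>1. 1 < E j m \<omega>"
proof -
  define c :: real where "c = 1 - exp (-1)"
  have c: "0 \<le> c" "c < 1" unfolding c_def by auto
  define B where "B n = {\<omega> \<in> space M. \<forall>m\<in>{1..n}. E j m \<omega> \<le> 1}" for n
  define Binf where "Binf = {\<omega> \<in> space M. \<forall>m\<ge>1. E j m \<omega> \<le> 1}"
  have Binf_ev: "Binf \<in> events"
  proof -
    have "Binf = space M \<inter> (\<Inter>m\<in>{1..}. {\<omega> \<in> space M. E j m \<omega> \<le> 1})" unfolding Binf_def by auto
    also have "\<dots> \<in> events"
    proof (intro sets.Int sets.top)
      have Ev: "{\<omega> \<in> space M. E j m \<omega> \<le> 1} \<in> events" if "1 \<le> m" for m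
        using Emeas[OF j that] by measurable
      show "(\<Inter>m\<in>{1..}. {\<omega> \<in> space M. E j m \<omega> \<le> 1}) \<in> events"
        by (rule sets.countable_INT) (use Ev in auto)
    qed
    finally show ?thesis .
  qed
  have pB: "prob (B n) = c ^ n" if "1 \<le> n" for n
  proof -
    have "prob (\<Inter>g\<in>{1..n}. {\<omega> \<in> space M. YY X E (Inr (j, g)) \<omega> \<in> {..1}}) =
        (\<Prod>g\<in>{1..n}. prob {\<omega> \<in> space M. YY X E (Inr (j, g)) \<omega> \<in> {..1}})"
    proof (rule indep_groups[OF indep, where G = "\<lambda>g. {Inr (j, g)}"])
      show "disjoint_family_on (\<lambda>g. {Inr (j, g)}) {1..n}" by (auto simp: disjoint_family_on_def)
    next
      fix g assume "g \<in> {1..n}"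
      then show "{Inr (j, g)} \<subseteq> II" using j by (auto simp: II_def)
      show "{\<omega> \<in> space M. YY X E (Inr (j, g)) \<omega> \<in> {..1}} \<in> sigma_sets (space M) (\<Union>u\<in>{Inr (j, g)}. gen M (YY X E) u)"
        by (rule gen_basic) auto
    qed (use that in auto)
    moreover have "(\<Inter>g\<in>{1..n}. {\<omega> \<in> space M. YY X E (Inr (j, g)) \<omega> \<in> {..1}}) = B n"
      using that unfolding B_def YY_def by auto
    moreover have "prob {\<omega> \<in> space M. YY X E (Inr (j, g)) \<omega> \<in> {..1}} = c" if "g \<in> {1..n}" for g
      using Ele1[OF j, of g] that unfolding YY_def c_def by simp
    ultimately show ?thesis by simp
  qed
  have le: "prob Binf \<le> c ^ n" for n
  proof (cases "n = 0")
    case True then show ?thesis by simp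
  next
    case False
    have "B n \<in> events"
    proof -
      have "B n = space M \<inter> (\<Inter>m\<in>{1..n}. {\<omega> \<in> space M. E j m \<omega> \<le> 1})" unfolding B_def using False by auto
      also have "\<dots> \<in> events"
      proof (intro sets.Int sets.top sets.finite_INT)
        fix m :: nat assume "m \<in> {1..n}"
        then have "1 \<le> m" by simp
        show "{\<omega> \<in> space M. E j m \<omega> \<le> 1} \<in> events" using Emeas[OF j \<open>1 \<le> m\<close>] by measurable
      qed (use False in auto)
      finally show ?thesis .
    qed
    moreover have "Binf \<subseteq> B n" unfolding Binf_def B_def by auto
    ultimately have "prob Binf \<le> prob (B n)" by (intro finite_measure_mono)
    then show ?thesis using pB[of n] False by simp
  qed
  have "Binf \<in> null_sets M"
    by (rule null_of_le_lim[where f="\<lambda>n. c ^ n", OF Binf_ev le]) (rule LIMSEQ_power_zero, use c in simp)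
  then show ?thesis
    by (rule AE_I') (auto simp: Binf_def not_less)
qed

lemma good_AE:
  "AE \<omega> in M. (\<forall>i\<ge>1. \<forall>m\<ge>1. 0 < E i m \<omega>) \<and> (\<forall>i\<ge>1. \<exists>m\<ge>1. 1 < E i m \<omega>) \<and> (\<forall>i\<ge>1. \<forall>m. X i m \<omega> \<in> {-1, 1})"
proof -
  have "AE \<omega> in M. \<forall>i. \<forall>m. 1 \<le> i \<longrightarrow> 1 \<le> m \<longrightarrow> 0 < E i m \<omega>"
    unfolding AE_all_countable by (intro allI) (auto intro: Epos_AE)
  moreover have "AE \<omega> in M. \<forall>i. 1 \<le> i \<longrightarrow> (\<exists>m\<ge>1. 1 < E i m \<omega>)"
    unfolding AE_all_countable
  proof
    fix i :: nat
    show "AE \<omega> in M. 1 \<le> i \<longrightarrow> (\<exists>m\<ge>1. 1 < E i m \<omega>)"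
      using big_AE[of i] by (cases "1 \<le> i") auto
  qed
  moreover have "AE \<omega> in M. \<forall>i. \<forall>m. 1 \<le> i \<longrightarrow> X i m \<omega> \<in> {-1, 1}"
    unfolding AE_all_countable
  proof (intro allI)
    fix i m :: nat
    show "AE \<omega> in M. 1 \<le> i \<longrightarrow> X i m \<omega> \<in> {-1, 1}"
      using X_vals[of i m] by (cases "1 \<le> i") auto
  qed
  ultimately show ?thesis by eventually_elim auto
qed

end

lemma count_char:
  fixes E :: "nat \<Rightarrow> nat \<Rightarrow> 'a \<Rightarrow> real"
  assumes pos: "\<forall>m\<ge>1. 0 < E i m \<omega>" and big: "\<exists>m\<ge>1. 1 < E i m \<omega>" and s: "s \<le> 1"
  shows "(card {m. 1 \<le> m \<and> (\<Sum>l=1..m. E i l \<omega>) < s} = 0 \<or>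
            (\<Sum>l=1..card {m. 1 \<le> m \<and> (\<Sum>l=1..m. E i l \<omega>) < s}. E i l \<omega>) < s) \<and>
         \<not> (\<Sum>l=1..Suc (card {m. 1 \<le> m \<and> (\<Sum>l=1..m. E i l \<omega>) < s}). E i l \<omega>) < s"
proof -
  define S where "S m = (\<Sum>l=1..m. E i l \<omega>)" for m
  define A where "A = {m. 1 \<le> m \<and> S m < s}"
  obtain m0 where m0: "1 \<le> m0" "1 < E i m0 \<omega>" using big by auto
  have Sm0: "s < S m0" using S_ge[of E i \<omega> m0, OF pos m0(1)] m0 s unfolding S_def by simp
  have Smono: "m \<le> m' \<Longrightarrow> S m \<le> S m'" for m m' using S_mono[of E i \<omega>, OF pos] unfolding S_def by blast
  have "A \<subseteq> {1..m0}"
  proof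
    fix m assume "m \<in> A"
    then have "1 \<le> m" "S m < s" unfolding A_def by auto
    moreover have "m \<le> m0" using Smono[of m0 m] Sm0 \<open>S m < s\<close> by (cases "m0 \<le> m") auto
    ultimately show "m \<in> {1..m0}" by simp
  qed
  then have finA: "finite A" by (rule finite_subset) simp
  have main: "(card A = 0 \<or> S (card A) < s) \<and> \<not> S (Suc (card A)) < s"
  proof (cases "A = {}")
    case True
    have "card A = 0" using True by simp
    moreover have "\<not> S (Suc 0) < s" using True unfolding A_def by auto
    ultimately show ?thesis by simp
  next
    case False
    define Mx where "Mx = Max A"
    have MxA: "Mx \<in> A" using Max_in[OF finA False] unfolding Mx_def .
    have "A = {1..Mx}"
    proof
      show "A \<subseteq> {1..Mx}" using Max_ge[OF finA] unfolding Mx_def A_def by auto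
      show "{1..Mx} \<subseteq> A"
      proof
        fix m assume m: "m \<in> {1..Mx}"
        have "S m \<le> S Mx" using m by (intro Smono) simp
        then show "m \<in> A" using MxA m unfolding A_def by auto
      qed
    qed
    then have cA: "card A = Mx" by simp
    have "Suc Mx \<notin> A" using Max_ge[OF finA, of "Suc Mx"] unfolding Mx_def by auto
    then show ?thesis using MxA cA unfolding A_def by auto
  qed
  then show ?thesis unfolding A_def S_def by simp
qed

lemma sets_Int_INT:
  assumes "finite I" "\<And>i. i \<in> I \<Longrightarrow> B i \<in> sets N"
  shows "space N \<inter> (\<Inter>i\<in>I. B i) \<in> sets N"
proof (cases "I = {}")
  case True then show ?thesis by simp
next
  case False
  then show ?thesis using assms by (intro sets.Int sets.top sets.finite_INT) auto
qed

context lsetup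
begin

lemma bad_null:
  assumes j: "1 \<le> j" and k: "1 \<le> k"
  shows "AE \<omega> in M. \<not> ((\<forall>i\<ge>1. \<forall>m\<ge>1. 0 < E i m \<omega>) \<and> (\<forall>i\<ge>1. \<exists>m\<ge>1. 1 < E i m \<omega>) \<and>
     (\<forall>i\<ge>1. \<forall>m. X i m \<omega> \<in> {-1, 1}) \<and> (\<Sum>l=1..k. E j l \<omega>) \<le> 1 \<and>
     (\<forall>n\<ge>1. 1 \<le> (\<Sum>l=1..n. \<Prod>i=1..l. X i (card {m. 1 \<le> m \<and> (\<Sum>l'=1..m. E i l' \<omega>) < (\<Sum>l=1..k. E j l \<omega>)}) \<omega>)))"
proof -
  define S where "S i m \<omega> = (\<Sum>l=1..m. E i l \<omega>)" for i m \<omega>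
  define Av where "Av N v = space M \<inter> (\<Inter>i\<in>insert j {1..N}. space M \<inter> (\<Inter>m\<in>{1..}. {\<omega>\<in>space M. 0 < E i m \<omega>})) \<inter>
      (space M \<inter> (\<Inter>i\<in>{1..N}. {\<omega>\<in>space M. (v i = 0 \<or> S i (v i) \<omega> < S j k \<omega>) \<and> \<not> S i (Suc (v i)) \<omega> < S j k \<omega>}))" for N v
  have Av_mem: "\<omega> \<in> Av N v \<longleftrightarrow> \<omega> \<in> space M \<and> (\<forall>i\<in>insert j {1..N}. \<forall>m\<ge>1. 0 < E i m \<omega>) \<and>
      (\<forall>i\<in>{1..N}. (v i = 0 \<or> S i (v i) \<omega> < S j k \<omega>) \<and> \<not> S i (Suc (v i)) \<omega> < S j k \<omega>)" for \<omega> N v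
    unfolding Av_def by auto
  define Dv where "Dv N v ys = {\<omega>\<in>space M. \<forall>i\<in>{1..N}. X i (v i) \<omega> = ys ! (i - 1)}" for N and v :: "nat \<Rightarrow> nat" and ys
  define OK where "OK N = {ys \<in> LL N. okY 0 1 ys}" for N
  define Cv where "Cv N v = (\<Union>ys\<in>OK N. Dv N v ys)" for N v
  define FK where "FK N K = (\<Union>v\<in>PiE {1..N} (\<lambda>_. {0..K}). Av N v \<inter> Cv N v)" for N K
  define F where "F N = (\<Union>K. FK N K)" for N
  define G0 :: "((nat \<times> nat) + (nat \<times> nat)) set" where "G0 = Inr ` ({1..} \<times> {1..})"
  define Msub where "Msub = sigma (space M) (\<Union>u\<in>G0. gen M (YY X E) u)"
  have sub: "(\<Union>u\<in>G0. gen M (YY X E) u) \<subseteq> Pow (space M)" unfolding gen_def by auto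
  have sets_Msub: "sets Msub = sigma_sets (space M) (\<Union>u\<in>G0. gen M (YY X E) u)"
    unfolding Msub_def using sub by (simp add: sets_measure_of_conv)
  have space_Msub: "space Msub = space M"
    unfolding Msub_def by (simp add: space_measure_of_conv)
  have gen_ev: "(\<Union>u\<in>G0. gen M (YY X E) u) \<subseteq> events"
  proof
    fix A assume "A \<in> (\<Union>u\<in>G0. gen M (YY X E) u)"
    then obtain u B where u: "u \<in> G0" "B \<in> sets borel" "A = YY X E u -` B \<inter> space M"
      unfolding gen_def by auto
    have "u \<in> II" using u(1) unfolding G0_def II_def by auto
    then show "A \<in> events" using rvY[of u] u(2,3) measurable_sets by blast
  qed
  have Msub_ev: "sets Msub \<subseteq> events"
    unfolding sets_Msub by (rule sets.sigma_sets_subset[OF gen_ev])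
  have EmeasSub: "E i m \<in> borel_measurable Msub" if "1 \<le> i" "1 \<le> m" for i m
  proof -
    have "Inr (i, m) \<in> G0" using that unfolding G0_def by auto
    then have "YY X E (Inr (i, m)) \<in> borel_measurable Msub" unfolding Msub_def by (rule gen_meas)
    then show ?thesis by (simp add: YY_def)
  qed
  have SmeasSub: "(\<lambda>\<omega>. S i m \<omega>) \<in> borel_measurable Msub" if "1 \<le> i" for i m
    unfolding S_def by (rule borel_measurable_sum) (use EmeasSub that in auto)
  have Av_sub: "Av N v \<in> sets Msub" for N v
  proof -
    have P1: "{\<omega>\<in>space M. 0 < E i m \<omega>} \<in> sets Msub" if "1 \<le> i" "1 \<le> m" for i m
    proof -
      have "{\<omega>\<in>space Msub. (\<lambda>_. 0::real) \<omega> < E i m \<omega>} \<in> sets Msub"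
        by (rule borel_measurable_less[OF borel_measurable_const EmeasSub[OF that]])
      then show ?thesis by (simp add: space_Msub)
    qed
    have P2: "{\<omega>\<in>space M. (v i = 0 \<or> S i (v i) \<omega> < S j k \<omega>) \<and> \<not> S i (Suc (v i)) \<omega> < S j k \<omega>} \<in> sets Msub" if "1 \<le> i" for i
    proof -
      have L1: "{\<omega>\<in>space Msub. S i (v i) \<omega> < S j k \<omega>} \<in> sets Msub"
        by (rule borel_measurable_less[OF SmeasSub[OF that] SmeasSub[OF j]])
      have L2: "{\<omega>\<in>space Msub. S i (Suc (v i)) \<omega> < S j k \<omega>} \<in> sets Msub"
        by (rule borel_measurable_less[OF SmeasSub[OF that] SmeasSub[OF j]])
      define T1 where "T1 = (if v i = 0 then space Msub else {\<omega>\<in>space Msub. S i (v i) \<omega> < S j k \<omega>})"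
      have L1': "T1 \<in> sets Msub"
      proof (cases "v i = 0")
        case True
        show ?thesis unfolding T1_def by (subst if_P[OF True]) (rule sets.top)
      next
        case False
        show ?thesis unfolding T1_def by (subst if_not_P[OF False]) (rule L1)
      qed
      have I: "T1 \<inter> (space Msub - {\<omega>\<in>space Msub. S i (Suc (v i)) \<omega> < S j k \<omega>}) \<in> sets Msub"
        by (rule sets.Int[OF L1' sets.Diff[OF sets.top L2]])
      have eq: "T1 \<inter> (space Msub - {\<omega>\<in>space Msub. S i (Suc (v i)) \<omega> < S j k \<omega>}) =
          {\<omega>\<in>space M. (v i = 0 \<or> S i (v i) \<omega> < S j k \<omega>) \<and> \<not> S i (Suc (v i)) \<omega> < S j k \<omega>}"
      proof (cases "v i = 0")
        case True
        then show ?thesis unfolding T1_def space_Msub by auto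
      next
        case False
        then show ?thesis unfolding T1_def space_Msub by auto
      qed
      show ?thesis using I unfolding eq .
    qed
    have Q0: "(\<Inter>m\<in>{1..}. {\<omega>\<in>space M. 0 < E i m \<omega>}) \<in> sets Msub" if "1 \<le> i" for i
    proof (rule sets.countable_INT)
      show "(\<lambda>m. {\<omega>\<in>space M. 0 < E i m \<omega>}) ` {1..} \<subseteq> sets Msub"
        by (rule image_subsetI) (rule P1[OF that], simp)
    qed simp
    have Q1: "space Msub \<inter> (\<Inter>i\<in>insert j {1..N}. space Msub \<inter> (\<Inter>m\<in>{1..}. {\<omega>\<in>space M. 0 < E i m \<omega>})) \<in> sets Msub"
    proof (rule sets_Int_INT)
      fix i assume i: "i \<in> insert j {1..N}"
      then have "1 \<le> i" using j by auto
      show "space Msub \<inter> (\<Inter>m\<in>{1..}. {\<omega>\<in>space M. 0 < E i m \<omega>}) \<in> sets Msub"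
        by (rule sets.Int[OF sets.top Q0[OF \<open>1 \<le> i\<close>]])
    qed simp
    have Q2: "space Msub \<inter> (\<Inter>i\<in>{1..N}. {\<omega>\<in>space M. (v i = 0 \<or> S i (v i) \<omega> < S j k \<omega>) \<and> \<not> S i (Suc (v i)) \<omega> < S j k \<omega>}) \<in> sets Msub"
    proof (rule sets_Int_INT)
      fix i assume "i \<in> {1..N}"
      then show "{\<omega>\<in>space M. (v i = 0 \<or> S i (v i) \<omega> < S j k \<omega>) \<and> \<not> S i (Suc (v i)) \<omega> < S j k \<omega>} \<in> sets Msub"
        by (intro P2) simp
    qed simp
    have eqA: "Av N v = (space Msub \<inter> (\<Inter>i\<in>insert j {1..N}. space Msub \<inter> (\<Inter>m\<in>{1..}. {\<omega>\<in>space M. 0 < E i m \<omega>}))) \<inter>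
      (space Msub \<inter> (\<Inter>i\<in>{1..N}. {\<omega>\<in>space M. (v i = 0 \<or> S i (v i) \<omega> < S j k \<omega>) \<and> \<not> S i (Suc (v i)) \<omega> < S j k \<omega>}))"
      by (simp only: Av_def space_Msub)
    show ?thesis unfolding eqA by (rule sets.Int[OF Q1 Q2])
  qed
  have Av_ev: "Av N v \<in> events" for N v using Av_sub Msub_ev by blast
  have AD: "Av N v \<inter> Dv N v ys \<in> events \<and> prob (Av N v \<inter> Dv N v ys) = prob (Av N v) * (1/2) ^ N"
    if ys: "ys \<in> LL N" for N v ys
  proof -
    define GG where "GG g = (if g = 0 then G0 else {Inl (g, v g)})" for g
    define AA where "AA g = (if g = 0 then Av N v else {\<omega>\<in>space M. X g (v g) \<omega> = ys ! (g - 1)})" for g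
    have AAs: "AA g \<in> sigma_sets (space M) (\<Union>u\<in>GG g. gen M (YY X E) u)" if "g \<in> {0..N}" for g
    proof (cases "g = 0")
      case True
      then show ?thesis using Av_sub[of N v] sets_Msub unfolding AA_def GG_def by simp
    next
      case False
      have "{\<omega>\<in>space M. YY X E (Inl (g, v g)) \<omega> \<in> {ys ! (g - 1)}} \<in> sigma_sets (space M) (\<Union>u\<in>{Inl (g, v g)}. gen M (YY X E) u)"
        by (rule gen_basic) auto
      then show ?thesis using False unfolding AA_def GG_def by (simp add: YY_def)
    qed
    have "prob (\<Inter>g\<in>{0..N}. AA g) = (\<Prod>g\<in>{0..N}. prob (AA g))"
    proof (rule indep_groups[OF indep, where G = GG])
      show "disjoint_family_on GG {0..N}" unfolding disjoint_family_on_def GG_def G0_def by auto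
    next
      fix g assume "g \<in> {0..N}"
      then show "GG g \<subseteq> II" unfolding GG_def G0_def II_def by auto
    qed (use AAs in auto)
    moreover have "(\<Inter>g\<in>{0..N}. AA g) = Av N v \<inter> Dv N v ys"
    proof -
      have "{0..N} = insert 0 {1..N}" by auto
      then have "(\<Inter>g\<in>{0..N}. AA g) = AA 0 \<inter> (\<Inter>g\<in>{1..N}. AA g)" by simp
      also have "\<dots> = Av N v \<inter> Dv N v ys"
        unfolding AA_def Dv_def using Av_mem[of _ N v] by auto
      finally show ?thesis .
    qed
    moreover have "(\<Prod>g\<in>{0..N}. prob (AA g)) = prob (Av N v) * (1/2) ^ N"
    proof -
      have "{0..N} = insert 0 {1..N}" by auto
      then have "(\<Prod>g\<in>{0..N}. prob (AA g)) = prob (AA 0) * (\<Prod>g\<in>{1..N}. prob (AA g))" by simp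
      also have "(\<Prod>g\<in>{1..N}. prob (AA g)) = (\<Prod>g\<in>{1..N}. 1/2)"
      proof (rule prod.cong[OF refl])
        fix g assume g: "g \<in> {1..N}"
        have "ys ! (g - 1) \<in> set ys" using g ys unfolding LL_def by auto
        then have "ys ! (g - 1) = 1 \<or> ys ! (g - 1) = -1" using ys unfolding LL_def by auto
        then show "prob (AA g) = 1/2" using Xprob[of g "ys ! (g - 1)" "v g"] g unfolding AA_def by auto
      qed
      finally show ?thesis unfolding AA_def by simp
    qed
    moreover have "(\<Inter>g\<in>{0..N}. AA g) \<in> events"
    proof (rule sets.finite_INT)
      fix g assume g: "g \<in> {0..N}"
      show "AA g \<in> events"
      proof (cases "g = 0")
        case True then show ?thesis using Av_ev unfolding AA_def by simp
      next
        case False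
        then have "1 \<le> g" by simp
        have "{\<omega>\<in>space M. X g (v g) \<omega> = ys ! (g - 1)} \<in> events" using Xmeas[OF \<open>1 \<le> g\<close>] by measurable
        then show ?thesis using False unfolding AA_def by simp
      qed
    qed auto
    ultimately show ?thesis by simp
  qed
  have finOK: "finite (OK N)" for N unfolding OK_def using finite_LL by simp
  have cardOK: "real (card (OK N)) = 2 ^ N * aa N 0" for N
    unfolding OK_def using card_okY[of 1 N 0] by simp
  have AC: "Av N v \<inter> Cv N v \<in> events \<and> prob (Av N v \<inter> Cv N v) = prob (Av N v) * aa N 0" for N v
  proof -
    have eq: "Av N v \<inter> Cv N v = (\<Union>ys\<in>OK N. Av N v \<inter> Dv N v ys)" unfolding Cv_def by auto
    have ev: "(\<lambda>ys. Av N v \<inter> Dv N v ys) ` OK N \<subseteq> events" using AD unfolding OK_def by auto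
    have disj: "disjoint_family_on (\<lambda>ys. Av N v \<inter> Dv N v ys) (OK N)"
    proof (unfold disjoint_family_on_def, intro ballI impI)
      fix ys ys' assume ys: "ys \<in> OK N" "ys' \<in> OK N" "ys \<noteq> ys'"
      have len: "length ys = N" "length ys' = N" using ys unfolding OK_def LL_def by auto
      obtain i where i: "i < N" "ys ! i \<noteq> ys' ! i"
        using ys(3) len nth_equalityI[of ys ys'] by auto
      show "(Av N v \<inter> Dv N v ys) \<inter> (Av N v \<inter> Dv N v ys') = {}"
      proof (rule ccontr)
        assume "(Av N v \<inter> Dv N v ys) \<inter> (Av N v \<inter> Dv N v ys') \<noteq> {}"
        then obtain \<omega> where o1: "\<omega> \<in> Dv N v ys" and o2: "\<omega> \<in> Dv N v ys'" by auto
        have si: "Suc i \<in> {1..N}" using i(1) by simp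
        have h1: "\<forall>i'\<in>{1..N}. X i' (v i') \<omega> = ys ! (i' - 1)" using o1 unfolding Dv_def by blast
        have h2: "\<forall>i'\<in>{1..N}. X i' (v i') \<omega> = ys' ! (i' - 1)" using o2 unfolding Dv_def by blast
        have "X (Suc i) (v (Suc i)) \<omega> = ys ! i" "X (Suc i) (v (Suc i)) \<omega> = ys' ! i"
          using bspec[OF h1 si] bspec[OF h2 si] by simp_all
        then show False using i(2) by simp
      qed
    qed
    have "prob (Av N v \<inter> Cv N v) = (\<Sum>ys\<in>OK N. prob (Av N v \<inter> Dv N v ys))"
      unfolding eq by (rule finite_measure_finite_Union[OF finOK ev disj])
    also have "\<dots> = (\<Sum>ys\<in>OK N. prob (Av N v) * (1/2) ^ N)"
      using AD unfolding OK_def by (intro sum.cong) auto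
    also have "\<dots> = real (card (OK N)) * prob (Av N v) * (1/2) ^ N" by simp
    also have "\<dots> = prob (Av N v) * aa N 0" unfolding cardOK by (simp add: power_one_over field_simps)
    finally have "prob (Av N v \<inter> Cv N v) = prob (Av N v) * aa N 0" .
    moreover have "Av N v \<inter> Cv N v \<in> events" unfolding eq using ev finOK by (intro sets.finite_UN) auto
    ultimately show ?thesis by simp
  qed
  have Av_disj: "disjoint_family_on (Av N) (PiE {1..N} (\<lambda>_. {0..K}))" for N K
  proof (unfold disjoint_family_on_def, intro ballI impI)
    fix v w assume vw: "v \<in> PiE {1..N} (\<lambda>_. {0..K})" "w \<in> PiE {1..N} (\<lambda>_. {0..K})" "v \<noteq> w"
    obtain i where i: "i \<in> {1..N}" "v i \<noteq> w i" using PiE_ext[OF vw(1,2)] vw(3) by blast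
    show "Av N v \<inter> Av N w = {}"
    proof (rule ccontr)
      assume "Av N v \<inter> Av N w \<noteq> {}"
      then obtain \<omega> where \<omega>: "\<omega> \<in> Av N v" "\<omega> \<in> Av N w" by auto
      have pos: "\<forall>m\<ge>1. 0 < E i m \<omega>" using \<omega>(1) i(1) unfolding Av_mem by auto
      have cv: "(v i = 0 \<or> S i (v i) \<omega> < S j k \<omega>) \<and> \<not> S i (Suc (v i)) \<omega> < S j k \<omega>"
        using \<omega>(1) i(1) unfolding Av_mem by auto
      have cw: "(w i = 0 \<or> S i (w i) \<omega> < S j k \<omega>) \<and> \<not> S i (Suc (w i)) \<omega> < S j k \<omega>"
        using \<omega>(2) i(1) unfolding Av_mem by auto
      have mono: "a \<le> b \<Longrightarrow> S i a \<omega> \<le> S i b \<omega>" for a b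
        using S_mono[of E i \<omega>, OF pos] unfolding S_def by blast
      show False
      proof (cases "v i < w i")
        case True
        then have "S i (Suc (v i)) \<omega> \<le> S i (w i) \<omega>" by (intro mono) simp
        then show False using cv cw True by auto
      next
        case False
        then have "w i < v i" using i(2) by simp
        then have "S i (Suc (w i)) \<omega> \<le> S i (v i) \<omega>" by (intro mono) simp
        then show False using cv cw \<open>w i < v i\<close> by auto
      qed
    qed
  qed
  have FK_ev: "FK N K \<in> events" for N K
    unfolding FK_def using AC by (intro sets.finite_UN) (auto intro: finite_PiE)
  have FK_le: "prob (FK N K) \<le> aa N 0" for N K
  proof -
    let ?P = "PiE {1..N} (\<lambda>_. {0..K::nat})"
    have finP: "finite ?P" by (intro finite_PiE) auto
    have "prob (FK N K) \<le> (\<Sum>v\<in>?P. prob (Av N v \<inter> Cv N v))"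
      unfolding FK_def using AC finP by (intro finite_measure_subadditive_finite) auto
    also have "\<dots> = (\<Sum>v\<in>?P. prob (Av N v)) * aa N 0" using AC by (simp add: sum_distrib_right)
    also have "(\<Sum>v\<in>?P. prob (Av N v)) = prob (\<Union>v\<in>?P. Av N v)"
      by (rule finite_measure_finite_Union[symmetric]) (use finP Av_ev Av_disj in auto)
    also have "prob (\<Union>v\<in>?P. Av N v) * aa N 0 \<le> 1 * aa N 0"
      using aa_bounds[of N 0] by (intro mult_right_mono) auto
    finally show ?thesis by simp
  qed
  have F_ev: "F N \<in> events" for N unfolding F_def using FK_ev by auto
  have F_le: "prob (F N) \<le> aa N 0" for N
  proof -
    have "incseq (FK N)"
    proof (rule incseq_SucI)
      fix K
      have "PiE {1..N} (\<lambda>_. {0..K}) \<subseteq> PiE {1..N} (\<lambda>_. {0..Suc K})" by (rule PiE_mono) auto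
      then show "FK N K \<subseteq> FK N (Suc K)" unfolding FK_def by blast
    qed
    then have "(\<lambda>K. prob (FK N K)) \<longlonglongrightarrow> prob (\<Union>K. FK N K)"
      using FK_ev by (intro finite_Lim_measure_incseq) auto
    then show ?thesis unfolding F_def by (rule LIMSEQ_le_const2) (use FK_le in auto)
  qed
  define Finf where "Finf = (\<Inter>N. F (Suc N))"
  have Finf_ev: "Finf \<in> events" unfolding Finf_def using F_ev by auto
  have Finf_le: "prob Finf \<le> aa (Suc N) 0" for N
  proof -
    have "prob Finf \<le> prob (F (Suc N))" unfolding Finf_def by (intro finite_measure_mono F_ev) auto
    then show ?thesis using F_le[of "Suc N"] by simp
  qed
  have lim: "(\<lambda>N. aa (Suc N) 0) \<longlonglongrightarrow> 0" using aa_lim0 by (rule LIMSEQ_Suc)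
  have null: "Finf \<in> null_sets M"
    by (rule null_of_le_lim[where f = "\<lambda>N. aa (Suc N) 0", OF Finf_ev Finf_le lim])
  show ?thesis
  proof (rule AE_I'[OF null], rule subsetI)
    fix \<omega> assume asm: "\<omega> \<in> {\<omega> \<in> space M. \<not> \<not> ((\<forall>i\<ge>1. \<forall>m\<ge>1. 0 < E i m \<omega>) \<and> (\<forall>i\<ge>1. \<exists>m\<ge>1. 1 < E i m \<omega>) \<and>
     (\<forall>i\<ge>1. \<forall>m. X i m \<omega> \<in> {-1, 1}) \<and> (\<Sum>l=1..k. E j l \<omega>) \<le> 1 \<and>
     (\<forall>n\<ge>1. 1 \<le> (\<Sum>l=1..n. \<Prod>i=1..l. X i (card {m. 1 \<le> m \<and> (\<Sum>l'=1..m. E i l' \<omega>) < (\<Sum>l=1..k. E j l \<omega>)}) \<omega>)))}"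
    have \<omega>: "\<omega> \<in> space M" using asm by blast
    have pos: "\<forall>i\<ge>1. \<forall>m\<ge>1. 0 < E i m \<omega>" using asm by blast
    have big: "\<forall>i\<ge>1. \<exists>m\<ge>1. 1 < E i m \<omega>" using asm by blast
    have vals: "\<forall>i\<ge>1. \<forall>m. X i m \<omega> \<in> {-1, 1}" using asm by blast
    have sle: "(\<Sum>l=1..k. E j l \<omega>) \<le> 1" using asm by blast
    have walk: "\<forall>n\<ge>1. 1 \<le> (\<Sum>l=1..n. \<Prod>i=1..l. X i (card {m. 1 \<le> m \<and> (\<Sum>l'=1..m. E i l' \<omega>) < (\<Sum>l=1..k. E j l \<omega>)}) \<omega>)"
      using asm by blast
    define c where "c i = card {m. 1 \<le> m \<and> (\<Sum>l'=1..m. E i l' \<omega>) < (\<Sum>l=1..k. E j l \<omega>)}" for i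
    have cc: "(c i = 0 \<or> S i (c i) \<omega> < S j k \<omega>) \<and> \<not> S i (Suc (c i)) \<omega> < S j k \<omega>" if "1 \<le> i" for i
      using count_char[of E i \<omega> "\<Sum>l=1..k. E j l \<omega>"] pos big sle that unfolding c_def S_def by auto
    show "\<omega> \<in> Finf" unfolding Finf_def
    proof (rule INT_I)
      fix N0 :: nat
      define N where "N = Suc N0"
      define v where "v = restrict c {1..N}"
      define K where "K = (\<Sum>i\<in>{1..N}. c i)"
      have cle: "c i \<le> sum c {1..N}" if "i \<in> {1..N}" for i
        by (rule member_le_sum) (use that in auto)
      have vP: "v \<in> PiE {1..N} (\<lambda>_. {0..K})"
        unfolding v_def K_def using cle by auto
      have vc: "i \<in> {1..N} \<Longrightarrow> v i = c i" for i unfolding v_def by simp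
      have inA: "\<omega> \<in> Av N v"
        unfolding Av_mem using \<omega> pos j cc vc by auto
      define ys where "ys = map (\<lambda>i. X i (v i) \<omega>) [1..<Suc N]"
      have ysLL: "ys \<in> LL N" unfolding ys_def LL_def using vals by auto
      have wN: "\<forall>n\<in>{1..N}. 1 \<le> (\<Sum>l=1..n. \<Prod>i=1..l. X i (v i) \<omega>)"
      proof
        fix n assume n: "n \<in> {1..N}"
        have "(\<Sum>l=1..n. \<Prod>i=1..l. X i (v i) \<omega>) = (\<Sum>l=1..n. \<Prod>i=1..l. X i (c i) \<omega>)"
          using n by (intro sum.cong prod.cong refl) (auto simp: vc)
        then show "1 \<le> (\<Sum>l=1..n. \<Prod>i=1..l. X i (v i) \<omega>)" using walk n unfolding c_def by auto
      qed
      have ysOK: "ys \<in> OK N" unfolding OK_def using ysLL walk_okY[of "\<lambda>i. X i (v i) \<omega>" N] wN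
        unfolding ys_def by simp
      have nthys: "ys ! (i - 1) = X i (v i) \<omega>" if "i \<in> {1..N}" for i
      proof -
        have "i - 1 < N" using that by auto
        have "[1..<Suc N] ! (i - 1) = 1 + (i - 1)" by (rule nth_upt) (use that in auto)
        also have "1 + (i - 1) = i" using that by auto
        finally have "[1..<Suc N] ! (i - 1) = i" .
        moreover have "map (\<lambda>i. X i (v i) \<omega>) [1..<Suc N] ! (i - 1) = X ([1..<Suc N] ! (i - 1)) (v ([1..<Suc N] ! (i - 1))) \<omega>"
          by (rule nth_map) (use \<open>i - 1 < N\<close> in simp)
        ultimately show ?thesis unfolding ys_def by simp
      qed
      have inD: "\<omega> \<in> Dv N v ys"
        unfolding Dv_def using \<omega> nthys by simp
      have "\<omega> \<in> FK N K" unfolding FK_def Cv_def using vP inA ysOK inD by blast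
      then show "\<omega> \<in> F (Suc N0)" unfolding F_def N_def by blast
    qed
  qed
qed

end

theorem lemma9:
  fixes M :: "'a measure"
    and X :: "nat \<Rightarrow> nat \<Rightarrow> 'a \<Rightarrow> real"
    and E :: "nat \<Rightarrow> nat \<Rightarrow> 'a \<Rightarrow> real"
    and \<alpha> :: real
  assumes "prob_space M"
    and indep: "prob_space.indep_vars M (\<lambda>_. borel)
          (\<lambda>u. case u of Inl (j, i) \<Rightarrow> X j i | Inr (j, k) \<Rightarrow> E j k)
          (Inl ` ({1..} \<times> UNIV) \<union> Inr ` ({1..} \<times> {1..}))"
    and X_vals: "\<And>j i. 1 \<le> j \<Longrightarrow> AE \<omega> in M. X j i \<omega> \<in> {-1, 1}"
    and X_half: "\<And>j i. 1 \<le> j \<Longrightarrow> measure M {\<omega> \<in> space M. X j i \<omega> = 1} = 1/2"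
    and E_exp: "\<And>j k. 1 \<le> j \<Longrightarrow> 1 \<le> k \<Longrightarrow> distributed M lborel (E j k) (exponential_density 1)"
    and "\<alpha> \<ge> 0"
  shows "AE \<omega> in M. (\<Inter>n\<in>{1..}. closure (Tset X E \<alpha> n \<omega>)) = (\<Inter>n\<in>{1..}. Tset X E \<alpha> n \<omega>)"
proof -
  have L: "lsetup M X E"
  proof (rule lsetup.intro)
    show "prob_space M" by fact
    show "lsetup_axioms M X E"
      by (rule lsetup_axioms.intro[OF indep X_vals X_half E_exp])
  qed
  interpret L: lsetup M X E by (rule L)
  have A1: "AE \<omega> in M. (\<forall>i\<ge>1. \<forall>m\<ge>1. 0 < E i m \<omega>) \<and> (\<forall>i\<ge>1. \<exists>m\<ge>1. 1 < E i m \<omega>) \<and> (\<forall>i\<ge>1. \<forall>m. X i m \<omega> \<in> {-1, 1})"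
    by (rule L.good_AE)
  have A2: "AE \<omega> in M. \<forall>j k. 1 \<le> j \<longrightarrow> 1 \<le> k \<longrightarrow> \<not> ((\<forall>i\<ge>1. \<forall>m\<ge>1. 0 < E i m \<omega>) \<and> (\<forall>i\<ge>1. \<exists>m\<ge>1. 1 < E i m \<omega>) \<and>
     (\<forall>i\<ge>1. \<forall>m. X i m \<omega> \<in> {-1, 1}) \<and> (\<Sum>l=1..k. E j l \<omega>) \<le> 1 \<and>
     (\<forall>n\<ge>1. 1 \<le> (\<Sum>l=1..n. \<Prod>i=1..l. X i (card {m. 1 \<le> m \<and> (\<Sum>l'=1..m. E i l' \<omega>) < (\<Sum>l=1..k. E j l \<omega>)}) \<omega>)))"
    unfolding AE_all_countable
  proof (intro allI)
    fix j k :: nat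
    show "AE \<omega> in M. 1 \<le> j \<longrightarrow> 1 \<le> k \<longrightarrow> \<not> ((\<forall>i\<ge>1. \<forall>m\<ge>1. 0 < E i m \<omega>) \<and> (\<forall>i\<ge>1. \<exists>m\<ge>1. 1 < E i m \<omega>) \<and>
     (\<forall>i\<ge>1. \<forall>m. X i m \<omega> \<in> {-1, 1}) \<and> (\<Sum>l=1..k. E j l \<omega>) \<le> 1 \<and>
     (\<forall>n\<ge>1. 1 \<le> (\<Sum>l=1..n. \<Prod>i=1..l. X i (card {m. 1 \<le> m \<and> (\<Sum>l'=1..m. E i l' \<omega>) < (\<Sum>l=1..k. E j l \<omega>)}) \<omega>)))"
    proof (cases "1 \<le> j \<and> 1 \<le> k")
      case True
      then show ?thesis using L.bad_null[of j k] by simp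
    next
      case False
      then show ?thesis by auto
    qed
  qed
  show ?thesis
    using A1 A2
  proof eventually_elim
    fix \<omega>
    assume g: "(\<forall>i\<ge>1. \<forall>m\<ge>1. 0 < E i m \<omega>) \<and> (\<forall>i\<ge>1. \<exists>m\<ge>1. 1 < E i m \<omega>) \<and> (\<forall>i\<ge>1. \<forall>m. X i m \<omega> \<in> {-1, 1})"
      and nb: "\<forall>j k. 1 \<le> j \<longrightarrow> 1 \<le> k \<longrightarrow> \<not> ((\<forall>i\<ge>1. \<forall>m\<ge>1. 0 < E i m \<omega>) \<and> (\<forall>i\<ge>1. \<exists>m\<ge>1. 1 < E i m \<omega>) \<and>
     (\<forall>i\<ge>1. \<forall>m. X i m \<omega> \<in> {-1, 1}) \<and> (\<Sum>l=1..k. E j l \<omega>) \<le> 1 \<and>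
     (\<forall>n\<ge>1. 1 \<le> (\<Sum>l=1..n. \<Prod>i=1..l. X i (card {m. 1 \<le> m \<and> (\<Sum>l'=1..m. E i l' \<omega>) < (\<Sum>l=1..k. E j l \<omega>)}) \<omega>)))"
    have pos: "\<forall>i\<ge>1. \<forall>m\<ge>1. 0 < E i m \<omega>" using g by blast
    have big: "\<forall>i\<ge>1. \<exists>m\<ge>1. 1 < E i m \<omega>" using g by blast
    have nobad: "\<forall>j\<ge>1. \<forall>k\<ge>1. (\<Sum>l=1..k. E j l \<omega>) \<le> 1 \<longrightarrow>
       \<not> (\<forall>n\<ge>1. 1 \<le> (\<Sum>l=1..n. \<Prod>i=1..l. X i (card {m. 1 \<le> m \<and> (\<Sum>l'=1..m. E i l' \<omega>) < (\<Sum>l=1..k. E j l \<omega>)}) \<omega>))"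
    proof (intro allI impI)
      fix j k :: nat
      assume "1 \<le> j" "1 \<le> k" "(\<Sum>l=1..k. E j l \<omega>) \<le> 1"
      then show "\<not> (\<forall>n\<ge>1. 1 \<le> (\<Sum>l=1..n. \<Prod>i=1..l. X i (card {m. 1 \<le> m \<and> (\<Sum>l'=1..m. E i l' \<omega>) < (\<Sum>l=1..k. E j l \<omega>)}) \<omega>))"
        using nb g by blast
    qed
    show "(\<Inter>n\<in>{1..}. closure (Tset X E \<alpha> n \<omega>)) = (\<Inter>n\<in>{1..}. Tset X E \<alpha> n \<omega>)"
      by (rule det_main[where E=E and X=X and \<omega>=\<omega>, OF pos big nobad assms(6)])
  qed
qed

end
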